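(* For all $\rho^{0},\rho^{1},\theta^{0},\theta^{1}>0$, \[ s(\rho^1,\theta^1)-s(\rho^0,\theta^0)\;\ge\;\frac{1}{\theta^1}\big(e(\rho^1,\theta^1)-e(\rho^0,\theta^0)\big)-\frac{1}{\rho^0\,\theta^1}\,\frac{p(\rho^1,\theta^1)}{\rho^1}\,\big(\rho^1-\rho^0\big). \]
   Context: Subscripts denote partial derivatives. Let $P\in C^3((0,\infty)^2)$, $P=P(\rho,\theta)$, and $Q\in C^2((0,\infty))$, $Q=Q(\theta)$, satisfy for all $\rho,\theta>0$: $P_\rho\ge0$, $(\rho P_\rho)_\rho\ge0$, $Q_\theta-\theta P_{\theta\theta}\ge\underline c_v$ for some constant $\underline c_v>0$. Define the pressure $p=\rho^2P_\rho$, the specific internal energy $e=P-\theta P_\theta+Q$, and the specific entropy $s(\rho,\theta)=\int_1^\theta\frac{Q_\theta(t)}{t}dt-P_\theta(\rho,\theta)$. *)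

theory Defs
  imports "HOL-Analysis.Analysis"
begin

definition pdr :: "(real \<Rightarrow> real \<Rightarrow> real) \<Rightarrow> real \<Rightarrow> real \<Rightarrow> real" where
  "pdr f = (\<lambda>r t. deriv (\<lambda>x. f x t) r)"
definition pdt :: "(real \<Rightarrow> real \<Rightarrow> real) \<Rightarrow> real \<Rightarrow> real \<Rightarrow> real" where
  "pdt f = (\<lambda>r t. deriv (\<lambda>y. f r y) t)"

definition quad :: "(real \<times> real) set" where
  "quad = {0<..} \<times> {0<..}"

definition C1q :: "(real \<Rightarrow> real \<Rightarrow> real) \<Rightarrow> bool" where
  "C1q f \<longleftrightarrow> continuous_on quad (\<lambda>z. f (fst z) (snd z)) \<and>
     (\<forall>r>0. \<forall>t>0. (\<lambda>x. f x t) differentiable (at r) \<and> (\<lambda>y. f r y) differentiable (at t))"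

fun Ckq :: "nat \<Rightarrow> (real \<Rightarrow> real \<Rightarrow> real) \<Rightarrow> bool" where
  "Ckq 0 f \<longleftrightarrow> continuous_on quad (\<lambda>z. f (fst z) (snd z))"
| "Ckq (Suc k) f \<longleftrightarrow> C1q f \<and> Ckq k (pdr f) \<and> Ckq k (pdt f)"

definition C2pos :: "(real \<Rightarrow> real) \<Rightarrow> bool" where
  "C2pos Q \<longleftrightarrow> (\<forall>t>0. Q differentiable (at t) \<and> deriv Q differentiable (at t))
     \<and> continuous_on {0<..} (deriv (deriv Q))"

definition pres :: "(real \<Rightarrow> real \<Rightarrow> real) \<Rightarrow> real \<Rightarrow> real \<Rightarrow> real" where
  "pres P r t = r^2 * pdr P r t"

definition energy :: "(real \<Rightarrow> real \<Rightarrow> real) \<Rightarrow> (real \<Rightarrow> real) \<Rightarrow> real \<Rightarrow> real \<Rightarrow> real" where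
  "energy P Q r t = P r t - t * pdt P r t + Q t"

text \<open>s(rho,theta) = int_1^theta Q'(tau)/tau dtau - P_theta(rho,theta), with the oriented
  integral (interval_lebesgue_integral handles theta < 1 with a sign).\<close>
definition entropy :: "(real \<Rightarrow> real \<Rightarrow> real) \<Rightarrow> (real \<Rightarrow> real) \<Rightarrow> real \<Rightarrow> real \<Rightarrow> real" where
  "entropy P Q r t = (LBINT \<tau>=1..t. deriv Q \<tau> / \<tau>) - pdt P r t"

end

theory Submission
  imports Defs
begin

lemma FTC_ent:
  fixes g :: "real \<Rightarrow> real"
  assumes cont: "continuous_on {0<..} g" and x: "x > 0"
  shows "((\<lambda>u. LBINT y=1..u. g y) has_real_derivative g x) (at x)"
proof -
  define a where "a = min 1 x / 2"
  define b where "b = max 1 x + 1"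
  have ab: "a > 0" "a \<le> 1" "1 \<le> b" "a < x" "x < b" using x by (auto simp: a_def b_def)
  have "continuous_on {a..b} g" using ab by (intro continuous_on_subset[OF cont]) auto
  then have "((\<lambda>u. LBINT y=1..u. g y) has_vector_derivative g x) (at x within {a..b})"
    using interval_integral_FTC2[of a 1 b g x] ab \<open>continuous_on {a..b} g\<close> by (simp add: one_ereal_def)
  then have "((\<lambda>u. LBINT y=1..u. g y) has_vector_derivative g x) (at x within {a<..<b})"
    by (rule has_vector_derivative_within_subset) auto
  then have "((\<lambda>u. LBINT y=1..u. g y) has_vector_derivative g x) (at x)"
    using ab by (subst (asm) has_vector_derivative_within_open) auto
  then show ?thesis by (simp add: has_real_derivative_iff_has_vector_derivative)
qed

theorem mainTheorem8:
  fixes P :: "real \<Rightarrow> real \<Rightarrow> real" and Q :: "real \<Rightarrow> real" and cv :: real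
  assumes hP: "Ckq 3 P"
    and hQ: "C2pos Q"
    and hcv: "cv > 0"
    and h1: "\<And>r t. r > 0 \<Longrightarrow> t > 0 \<Longrightarrow> pdr P r t \<ge> 0"
    and h2: "\<And>r t. r > 0 \<Longrightarrow> t > 0 \<Longrightarrow> pdr (\<lambda>x y. x * pdr P x y) r t \<ge> 0"
    and h3: "\<And>r t. r > 0 \<Longrightarrow> t > 0 \<Longrightarrow> deriv Q t - t * pdt (pdt P) r t \<ge> cv"
    and r0: "r0 > 0" and r1: "r1 > 0" and t0: "t0 > 0" and t1: "t1 > 0"
  shows "entropy P Q r1 t1 - entropy P Q r0 t0 \<ge>
           (1 / t1) * (energy P Q r1 t1 - energy P Q r0 t0)
           - (1 / (r0 * t1)) * (pres P r1 t1 / r1) * (r1 - r0)"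
proof -
  have hP': "C1q P \<and> Ckq 2 (pdr P) \<and> Ckq 2 (pdt P)" using hP by (simp add: eval_nat_numeral)
  have c1r: "C1q (pdr P)" using hP' by (simp add: eval_nat_numeral)
  have c1t: "C1q (pdt P)" using hP' by (simp add: eval_nat_numeral)
  have dPr: "((\<lambda>x. P x t) has_real_derivative pdr P r t) (at r)" if "r > 0" "t > 0" for r t
    using hP' that unfolding C1q_def pdr_def by (simp add: DERIV_deriv_iff_real_differentiable)
  have dPt: "((\<lambda>y. P r y) has_real_derivative pdt P r t) (at t)" if "r > 0" "t > 0" for r t
    using hP' that unfolding C1q_def pdt_def by (simp add: DERIV_deriv_iff_real_differentiable)
  have dPtt: "((\<lambda>y. pdt P r y) has_real_derivative pdt (pdt P) r t) (at t)" if "r > 0" "t > 0" for r t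
    using c1t that unfolding C1q_def pdt_def[of "pdt P"]
    by (simp add: DERIV_deriv_iff_real_differentiable)
  have dg: "((\<lambda>x. x * pdr P x t) has_real_derivative pdr (\<lambda>x y. x * pdr P x y) r t) (at r)"
    if "r > 0" "t > 0" for r t
  proof -
    have "(\<lambda>x. pdr P x t) differentiable (at r)" using c1r that unfolding C1q_def by auto
    then have "(\<lambda>x. x * pdr P x t) differentiable (at r)" by (intro differentiable_mult) auto
    then show ?thesis unfolding pdr_def[of "\<lambda>x y. x * pdr P x y"]
      by (simp add: DERIV_deriv_iff_real_differentiable)
  qed
  have dQ: "(Q has_real_derivative deriv Q t) (at t)" if "t > 0" for t
    using hQ that unfolding C2pos_def by (simp add: DERIV_deriv_iff_real_differentiable)
  have contQ': "continuous_on {0<..} (\<lambda>t. deriv Q t / t)"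
  proof -
    have "continuous_on {0<..} (deriv Q)"
      using hQ unfolding C2pos_def
      by (intro continuous_at_imp_continuous_on) (auto intro: differentiable_imp_continuous_within)
    then show ?thesis by (intro continuous_intros) auto
  qed
  have dS: "((\<lambda>u. LBINT y=1..u. deriv Q y / y) has_real_derivative deriv Q t / t) (at t)"
    if "t > 0" for t
    using FTC_ent[OF contQ' that] .
  define \<Phi> where "\<Phi> = (\<lambda>t. t1 * entropy P Q r0 t - energy P Q r0 t)"
  define \<Phi>' where "\<Phi>' = (\<lambda>t. t1 * (deriv Q t / t - pdt (pdt P) r0 t)
      - (pdt P r0 t - (pdt P r0 t + t * pdt (pdt P) r0 t) + deriv Q t))"
  have dPhi: "(\<Phi> has_real_derivative \<Phi>' t) (at t)" if "t > 0" for t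
  proof -
    have a: "((\<lambda>z. t1 * ((LBINT y=1..z. deriv Q y / y) - pdt P r0 z)) has_real_derivative
      t1 * (deriv Q t / t - pdt (pdt P) r0 t)) (at t)"
      by (intro DERIV_cmult DERIV_diff dS dPtt r0 that)
    have b: "((\<lambda>z. z * pdt P r0 z) has_real_derivative pdt P r0 t + t * pdt (pdt P) r0 t) (at t)"
      using DERIV_mult[OF DERIV_ident dPtt[OF r0 that]] by (simp add: mult.commute)
    show ?thesis unfolding \<Phi>_def \<Phi>'_def entropy_def energy_def
      by (intro DERIV_diff DERIV_add a b dPt dQ r0 that)
  qed
  have Phi'_eq: "\<Phi>' t = (t1 - t) / t * (deriv Q t - t * pdt (pdt P) r0 t)" if "t > 0" for t
    using that unfolding \<Phi>'_def by (simp add: field_simps)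
  have thpart: "\<Phi> t1 \<ge> \<Phi> t0"
  proof (cases t0 t1 rule: linorder_cases)
    case less
    obtain z where z: "t0 < z" "z < t1" "\<Phi> t1 - \<Phi> t0 = (t1 - t0) * \<Phi>' z"
      using MVT2[OF less, of \<Phi> \<Phi>'] dPhi t0 by force
    have "\<Phi>' z \<ge> 0" using z t0 h3[OF r0, of z] hcv by (simp add: Phi'_eq)
    then have "(t1 - t0) * \<Phi>' z \<ge> 0" using less by simp
    then show ?thesis using z by linarith
  next
    case equal then show ?thesis by simp
  next
    case greater
    obtain z where z: "t1 < z" "z < t0" "\<Phi> t0 - \<Phi> t1 = (t0 - t1) * \<Phi>' z"
      using MVT2[OF greater, of \<Phi> \<Phi>'] dPhi t1 by force
    have "\<Phi>' z \<le> 0" using z t1 h3[OF r0, of z] hcv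
      by (simp add: Phi'_eq divide_nonpos_pos mult_nonpos_nonneg)
    then have "(t0 - t1) * \<Phi>' z \<le> 0" using greater by (simp add: mult_nonneg_nonpos)
    then show ?thesis using z by linarith
  qed
  define g where "g = (\<lambda>x. x * pdr P x t1)"
  have gmono: "g a \<le> g b" if "0 < a" "a \<le> b" for a b
    unfolding g_def
    by (rule DERIV_nonneg_imp_nondecreasing[OF \<open>a \<le> b\<close>])
       (use that dg[OF _ t1] h2[OF _ t1] in \<open>meson order.trans order_less_le_trans\<close>)
  have gnn: "g a \<ge> 0" if "a > 0" for a using h1[OF that t1] that unfolding g_def by simp
  have rhopart: "P r1 t1 - P r0 t1 \<le> g r1 * (r1 - r0) / r0"
  proof (cases r0 r1 rule: linorder_cases)
    case less
    obtain z where z: "r0 < z" "z < r1" "P r1 t1 - P r0 t1 = (r1 - r0) * pdr P z t1"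
      using MVT2[OF less, of "\<lambda>x. P x t1" "\<lambda>x. pdr P x t1"] dPr[OF _ t1] r0 by force
    have "pdr P z t1 = g z / z" using z r0 unfolding g_def by simp
    also have "\<dots> \<le> g r1 / z" using gmono[of z r1] z r0 by (simp add: divide_right_mono)
    also have "\<dots> \<le> g r1 / r0" using gnn[of r1] r1 z r0 by (simp add: divide_left_mono)
    finally show ?thesis using z less by (smt (verit) mult_left_mono times_divide_eq_right mult.commute)
  next
    case equal then show ?thesis by simp
  next
    case greater
    obtain z where z: "r1 < z" "z < r0" "P r0 t1 - P r1 t1 = (r0 - r1) * pdr P z t1"
      using MVT2[OF greater, of "\<lambda>x. P x t1" "\<lambda>x. pdr P x t1"] dPr[OF _ t1] r1 by force
    have "g r1 / r0 \<le> g z / r0" using gmono[of r1 z] z r1 r0 by (simp add: divide_right_mono)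
    also have "\<dots> \<le> g z / z" using gnn[of z] r1 z r0 by (simp add: divide_left_mono)
    also have "\<dots> = pdr P z t1" using z r1 unfolding g_def by simp
    finally have "g r1 / r0 \<le> pdr P z t1" .
    then have "(r0 - r1) * (g r1 / r0) \<le> (r0 - r1) * pdr P z t1"
      using greater by (intro mult_left_mono) auto
    moreover have "g r1 * (r1 - r0) / r0 = - ((r0 - r1) * (g r1 / r0))" using r0 by (simp add: field_simps)
    ultimately show ?thesis using z by linarith
  qed
  have key: "t1 * (entropy P Q r1 t1 - entropy P Q r0 t0) - (energy P Q r1 t1 - energy P Q r0 t0)
      + g r1 * (r1 - r0) / r0 \<ge> 0"
  proof -
    have "t1 * entropy P Q r1 t1 - energy P Q r1 t1 = \<Phi> t1 - (P r1 t1 - P r0 t1)"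
      unfolding \<Phi>_def entropy_def energy_def by (simp add: algebra_simps)
    then show ?thesis using thpart rhopart unfolding \<Phi>_def by (simp add: algebra_simps)
  qed
  have pg: "pres P r1 t1 / r1 = g r1" using r1 unfolding pres_def g_def by (simp add: power2_eq_square)
  define K where "K = t1 * (entropy P Q r1 t1 - entropy P Q r0 t0) - (energy P Q r1 t1 - energy P Q r0 t0)
      + g r1 * (r1 - r0) / r0"
  have eq: "entropy P Q r1 t1 - entropy P Q r0 t0 - ((1 / t1) * (energy P Q r1 t1 - energy P Q r0 t0)
           - (1 / (r0 * t1)) * g r1 * (r1 - r0)) = (1 / t1) * K"
    unfolding K_def using t1 r0 by (simp add: field_simps)
  have "(1 / t1) * K \<ge> 0" using key t1 unfolding K_def by simp
  then show ?thesis using eq unfolding pg by linarith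
qed

end
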